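(* For every finite alphabet $\Sigma$ with $|\Sigma| \geq 2$, the group $\mathrm{Aut}(\Sigma^\mathbb{Z})$ does not satisfy the Tits alternative. That is, there is a finitely generated subgroup of $\mathrm{Aut}(\Sigma^\mathbb{Z})$ which is not virtually solvable and contains no free group on two generators.
   Context: $\Sigma^\mathbb{Z}$ carries the product topology and the shift $\sigma(x)_i = x_{i+1}$. $\mathrm{Aut}(\Sigma^\mathbb{Z})$ is the group of homeomorphisms $f:\Sigma^\mathbb{Z}\to\Sigma^\mathbb{Z}$ with $f\circ\sigma=\sigma\circ f$ (the group of reversible cellular automata). A group $G$ satisfies the Tits alternative if every finitely generated subgroup $H \le G$ is either virtually solvable (has a solvable subgroup of finite index) or contains a free group on two generators. *)

theory Defs
  imports "HOL-Analysis.Analysis" "HOL-Algebra.Solvable_Groups" "HOL-Algebra.Generated_Groups"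
begin

definition fullshift_top :: "(int \<Rightarrow> 'a) topology" where
  "fullshift_top = product_topology (\<lambda>_. discrete_topology (UNIV :: 'a set)) UNIV"

definition shift :: "(int \<Rightarrow> 'a) \<Rightarrow> (int \<Rightarrow> 'a)" where
  "shift x = (\<lambda>i. x (i + 1))"

definition aut_shift :: "((int \<Rightarrow> 'a) \<Rightarrow> (int \<Rightarrow> 'a)) monoid" where
  "aut_shift = \<lparr> carrier = {f. homeomorphic_map fullshift_top fullshift_top f \<and> f \<circ> shift = shift \<circ> f},
                 mult = (\<circ>), one = id \<rparr>"

definition finitely_generated_subgroup :: "('g, 'b) monoid_scheme \<Rightarrow> 'g set \<Rightarrow> bool" where
  "finitely_generated_subgroup G H \<longleftrightarrow> (\<exists>S. finite S \<and> S \<subseteq> carrier G \<and> H = generate G S)"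

definition virtually_solvable :: "('g, 'b) monoid_scheme \<Rightarrow> bool" where
  "virtually_solvable G \<longleftrightarrow>
     (\<exists>K. subgroup K G \<and> finite (rcosets\<^bsub>G\<^esub> K) \<and> solvable (G\<lparr>carrier := K\<rparr>))"

text \<open>Words in two letters: (True/False = a/b, True/False = exponent +1/-1).\<close>
fun reduced_word :: "(bool \<times> bool) list \<Rightarrow> bool" where
  "reduced_word (x # y # w) = (\<not> (fst x = fst y \<and> snd x \<noteq> snd y) \<and> reduced_word (y # w))"
| "reduced_word _ = True"

definition eval_word :: "('g, 'b) monoid_scheme \<Rightarrow> 'g \<Rightarrow> 'g \<Rightarrow> (bool \<times> bool) list \<Rightarrow> 'g" where
  "eval_word G a b w = foldr (\<lambda>(l, s) acc. (let g = (if l then a else b) in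
        (if s then g else inv\<^bsub>G\<^esub> g)) \<otimes>\<^bsub>G\<^esub> acc) w \<one>\<^bsub>G\<^esub>"

definition contains_free_group_rank2 :: "('g, 'b) monoid_scheme \<Rightarrow> bool" where
  "contains_free_group_rank2 G \<longleftrightarrow>
     (\<exists>a\<in>carrier G. \<exists>b\<in>carrier G. \<forall>w. w \<noteq> [] \<and> reduced_word w \<longrightarrow> eval_word G a b w \<noteq> \<one>\<^bsub>G\<^esub>)"

end

theory Submission
  imports Defs
begin


lemma topspace_fs[simp]: "topspace fullshift_top = UNIV"
  by (simp add: fullshift_top_def)

lemma cont_coord: "continuous_map fullshift_top (discrete_topology UNIV) (\<lambda>x. x i)"
  unfolding fullshift_top_def by (rule continuous_map_product_projection) simp

lemma open_eqcoord: "openin fullshift_top {y. y i = a}"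
proof -
  have "openin fullshift_top {y \<in> topspace fullshift_top. y i \<in> {a}}"
    by (rule openin_continuous_map_preimage[OF cont_coord]) simp
  thus ?thesis by simp
qed

lemma open_cyl: "openin fullshift_top {y. \<forall>i\<in>{-N..N::int}. y (k+i) = x (k+i)}"
proof -
  have "openin fullshift_top ((\<Inter>i\<in>{-N..N}. {y. y (k+i) = x (k+i)}) \<inter> topspace fullshift_top)"
    by (rule openin_INT) (auto intro: open_eqcoord)
  moreover have "(\<Inter>i\<in>{-N..N}. {y. y (k+i) = x (k+i)}) \<inter> topspace fullshift_top = {y. \<forall>i\<in>{-N..N::int}. y (k+i) = x (k+i)}"
    by auto
  ultimately show ?thesis by simp
qed

lemma local_cont:
  fixes F :: "(int \<Rightarrow> 'a) \<Rightarrow> int \<Rightarrow> 'a"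
  assumes "\<And>k. \<exists>N. \<forall>x y. (\<forall>i\<in>{-N..N::int}. x (k+i) = y (k+i)) \<longrightarrow> F x k = F y k"
  shows "continuous_map fullshift_top fullshift_top F"
proof -
  have "\<forall>k. continuous_map fullshift_top (discrete_topology UNIV) (\<lambda>x. F x k)"
  proof
    fix k
    obtain N where N: "\<forall>x y. (\<forall>i\<in>{-N..N::int}. x (k+i) = y (k+i)) \<longrightarrow> F x k = F y k"
      using assms by blast
    show "continuous_map fullshift_top (discrete_topology UNIV) (\<lambda>x. F x k)"
      unfolding continuous_map_def
    proof (intro conjI allI impI)
      show "(\<lambda>x. F x k) \<in> topspace fullshift_top \<rightarrow> topspace (discrete_topology UNIV)" by simp
      fix U :: "'a set" assume "openin (discrete_topology UNIV) U"
      show "openin fullshift_top {x \<in> topspace fullshift_top. F x k \<in> U}"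
      proof (subst openin_subopen, intro ballI)
        fix x assume x: "x \<in> {x \<in> topspace fullshift_top. F x k \<in> U}"
        let ?C = "{y. \<forall>i\<in>{-N..N::int}. y (k+i) = x (k+i)}"
        have "?C \<subseteq> {x \<in> topspace fullshift_top. F x k \<in> U}"
          using N x by (auto; metis)
        thus "\<exists>T. openin fullshift_top T \<and> x \<in> T \<and> T \<subseteq> {x \<in> topspace fullshift_top. F x k \<in> U}"
          using open_cyl[of N k x] by blast
      qed
    qed
  qed
  thus ?thesis
    using continuous_map_componentwise_UNIV[of fullshift_top "\<lambda>_. discrete_topology UNIV" F]
    by (metis fullshift_top_def)
qed




type_synonym lv = "bool \<times> bool \<times> bool"

locale bin =
  fixes Zz Oo :: 'a
  assumes ZO: "Zz \<noteq> Oo"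
begin

definition bit :: "(int \<Rightarrow> 'a) \<Rightarrow> int \<Rightarrow> bool" where
  "bit x p \<longleftrightarrow> x p = Zz \<or> x p = Oo"

definition blk :: "(int \<Rightarrow> 'a) \<Rightarrow> int \<Rightarrow> bool" where
  "blk x s \<longleftrightarrow> x s = Oo \<and> x (s+1) = Oo \<and> x (s+2) = Oo \<and> x (s+3) = Oo \<and> x (s+4) = Zz \<and> bit x (s+5)
     \<and> x (s+6) = Zz \<and> bit x (s+7) \<and> x (s+8) = Zz \<and> bit x (s+9) \<and> x (s+10) = Zz \<and> bit x (s+11)
     \<and> x (s+12) = Zz \<and> bit x (s+13) \<and> x (s+14) = Zz \<and> bit x (s+15) \<and> x (s+16) = Zz \<and> bit x (s+17)
     \<and> x (s+18) = Zz"

lemma blk_no_overlap_aux: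
  assumes "blk x s" "blk x (s+d)" "1 \<le> d" "d \<le> 18"
  shows False
proof -
  have "d=1 \<or> d=2 \<or> d=3 \<or> d=4 \<or> d=5 \<or> d=6 \<or> d=7 \<or> d=8 \<or> d=9 \<or> d=10 \<or> d=11 \<or> d=12
    \<or> d=13 \<or> d=14 \<or> d=15 \<or> d=16 \<or> d=17 \<or> d=18" using assms(3,4) by presburger
  thus False using assms(1,2) ZO by (elim disjE) (simp_all add: blk_def add.assoc)
qed

lemma blk_sep:
  assumes "blk x s" "blk x s'" "s \<noteq> s'"
  shows "s' \<ge> s + 19 \<or> s \<ge> s' + 19"
proof (rule ccontr)
  assume nt: "\<not> ?thesis"
  show False
  proof (cases "s < s'")
    case True
    then show False using blk_no_overlap_aux[of x s "s'-s"] assms nt by auto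
  next
    case False
    then show False using blk_no_overlap_aux[of x s' "s-s'"] assms nt by auto
  qed
qed

definition LO :: "int set" where "LO = {7,9,11,13,15,17}"

definition isl :: "(int \<Rightarrow> 'a) \<Rightarrow> int \<Rightarrow> bool" where
  "isl x k \<longleftrightarrow> (\<exists>s. blk x s \<and> k - s \<in> LO)"

definition owner :: "(int \<Rightarrow> 'a) \<Rightarrow> int \<Rightarrow> int" where
  "owner x k = (THE s. blk x s \<and> k - s \<in> LO)"

definition bv :: "bool \<Rightarrow> 'a" where "bv b = (if b then Oo else Zz)"

definition rd :: "(int \<Rightarrow> 'a) \<Rightarrow> int \<Rightarrow> bool" where "rd x p \<longleftrightarrow> x p = Oo"

definition getbit :: "int \<Rightarrow> lv \<Rightarrow> bool" where
  "getbit dd v = (if dd = 7 \<or> dd = 13 then fst v else if dd = 9 \<or> dd = 15 then fst (snd v) else snd (snd v))"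

definition Op :: "(int \<Rightarrow> 'a) \<Rightarrow> (int \<Rightarrow> bool \<Rightarrow> lv) \<Rightarrow> int \<Rightarrow> 'a" where
  "Op x F k = (if isl x k then bv (getbit (k - owner x k) (F (owner x k) (k - owner x k \<le> 11))) else x k)"

definition lamp :: "(int \<Rightarrow> 'a) \<Rightarrow> int \<Rightarrow> bool \<Rightarrow> lv" where
  "lamp x s tb = (if tb then (rd x (s+7), rd x (s+9), rd x (s+11)) else (rd x (s+13), rd x (s+15), rd x (s+17)))"

definition head :: "(int \<Rightarrow> 'a) \<Rightarrow> int \<Rightarrow> bool" where "head x s = rd x (s+5)"

lemma owner_unique:
  assumes "blk x s" "k - s \<in> LO" "blk x s'" "k - s' \<in> LO"
  shows "s = s'"
  using blk_sep[of x s s'] assms by (auto simp: LO_def)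

lemma owner_eq: "blk x s \<Longrightarrow> k - s \<in> LO \<Longrightarrow> owner x k = s"
  unfolding owner_def by (rule the_equality) (auto dest: owner_unique)

lemma isl_owner: "isl x k \<Longrightarrow> blk x (owner x k) \<and> k - owner x k \<in> LO"
  unfolding isl_def using owner_eq by metis

lemma Op_lampos: "blk x s \<Longrightarrow> dd \<in> LO \<Longrightarrow> Op x F (s+dd) = bv (getbit dd (F s (dd \<le> 11)))"
  unfolding Op_def using owner_eq[of x s "s+dd"] by (auto simp: isl_def)

lemma Op_nonl: "\<not> isl x k \<Longrightarrow> Op x F k = x k"
  unfolding Op_def by simp

lemma bv_bit: "bv b = Zz \<or> bv b = Oo" by (simp add: bv_def)

lemma Op_bit: "isl x k \<Longrightarrow> Op x F k = Zz \<or> Op x F k = Oo"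
  unfolding Op_def by (simp add: bv_bit)


end


context bin begin
lemma blk_cong:
  assumes h: "\<And>dd. 0 \<le> dd \<Longrightarrow> dd \<le> 18 \<Longrightarrow> x (s+dd) = y (s+dd)"
  shows "blk x s \<longleftrightarrow> blk y s"
  using h[of 0] h[of 1] h[of 2] h[of 3] h[of 4] h[of 5] h[of 6] h[of 7] h[of 8] h[of 9] h[of 10]
    h[of 11] h[of 12] h[of 13] h[of 14] h[of 15] h[of 16] h[of 17] h[of 18]
  by (simp add: blk_def bit_def)

lemma nonlamp_not_isl:
  assumes "blk x s" "0 \<le> dd" "dd \<le> 18" "dd \<notin> LO"
  shows "\<not> isl x (s+dd)"
proof
  assume "isl x (s+dd)"
  then obtain s' where s': "blk x s'" "s + dd - s' \<in> LO" unfolding isl_def by auto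
  have "s' \<noteq> s" using s' assms by auto
  then show False using blk_sep[OF assms(1) s'(1)] s'(2) assms(2,3) by (auto simp: LO_def)
qed

lemma blk_Op_rev:
  assumes b: "blk x s"
  shows "blk (Op x F) s"
proof -
  have nl: "Op x F (s+dd) = x (s+dd)" if "dd \<in> {0,1,2,3,4,5,6,8,10,12,14,16,18}" for dd
    using nonlamp_not_isl[OF b, of dd] that Op_nonl by (auto simp: LO_def)
  have lp: "bit (Op x F) (s+dd)" if "dd \<in> LO" for dd
    using Op_lampos[OF b that] bv_bit unfolding bit_def by metis
  show ?thesis
    using b nl[of 0] nl[of 1] nl[of 2] nl[of 3] nl[of 4] nl[of 5] nl[of 6] nl[of 8] nl[of 10] nl[of 12]
      nl[of 14] nl[of 16] nl[of 18] lp[of 7] lp[of 9] lp[of 11] lp[of 13] lp[of 15] lp[of 17]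
    by (simp add: blk_def LO_def bit_def)
qed


end


context bin begin
lemma blk_Op: "blk (Op x F) s \<longleftrightarrow> blk x s"
proof
  assume b: "blk (Op x F) s"
  show "blk x s"
  proof (cases "\<exists>dd. 0 \<le> dd \<and> dd \<le> 18 \<and> isl x (s+dd)")
    case True
    then obtain dd where dd: "0 \<le> dd" "dd \<le> 18" "isl x (s+dd)" by auto
    let ?s' = "owner x (s+dd)"
    have s': "blk x ?s'" "s + dd - ?s' \<in> LO" using isl_owner[OF dd(3)] by auto
    show ?thesis
    proof (cases "?s' = s")
      case True then show ?thesis using s' by simp
    next
      case False
      have b2: "blk (Op x F) ?s'" using blk_Op_rev[OF s'(1)] .
      show ?thesis using blk_sep[OF b b2] False s'(2) dd by (auto simp: LO_def)
    qed
  next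
    case False
    then have "\<And>dd. 0 \<le> dd \<Longrightarrow> dd \<le> 18 \<Longrightarrow> Op x F (s+dd) = x (s+dd)" using Op_nonl by auto
    then show ?thesis using blk_cong[of "Op x F" s x] b by simp
  qed
qed (rule blk_Op_rev)

lemma isl_Op: "isl (Op x F) k \<longleftrightarrow> isl x k"
  unfolding isl_def blk_Op ..

lemma owner_Op: "owner (Op x F) k = owner x k"
  unfolding owner_def blk_Op ..

lemma rd_bv: "rd (\<lambda>_. bv b) p = b"
  using ZO by (auto simp: rd_def bv_def)


end


context bin begin
lemma lamp_Op: "blk x s \<Longrightarrow> lamp (Op x F) s tb = F s tb"
proof -
  assume b: "blk x s"
  have r: "rd (Op x F) (s+dd) = getbit dd (F s (dd \<le> 11))" if "dd \<in> LO" for dd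
    using Op_lampos[OF b that, of F] ZO by (simp add: rd_def bv_def)
  show ?thesis
    using r[of 7] r[of 9] r[of 11] r[of 13] r[of 15] r[of 17]
    by (simp add: lamp_def LO_def getbit_def)
qed

lemma head_Op: "blk x s \<Longrightarrow> head (Op x F) s = head x s"
  using nonlamp_not_isl[of x s 5] Op_nonl[of x "s+5" F] by (simp add: head_def rd_def LO_def)

lemma Op_Op: "Op (Op x F) G = Op x G"
  by (rule ext) (simp add: Op_def isl_Op owner_Op)

lemma Op_cong: "(\<And>s. blk x s \<Longrightarrow> F s = G s) \<Longrightarrow> Op x F = Op x G"
  by (rule ext) (auto simp: Op_def dest: isl_owner)

lemma Op_lamp: "Op x (lamp x) = x"
proof (rule ext)
  fix k
  show "Op x (lamp x) k = x k"
  proof (cases "isl x k")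
    case True
    let ?s = "owner x k"
    have s: "blk x ?s" "k - ?s \<in> LO" using isl_owner[OF True] by auto
    define dd where "dd = k - ?s"
    have k: "k = ?s + dd" using dd_def by simp
    have bt: "bit x (?s + dd)" using s(1) s(2) unfolding dd_def[symmetric] LO_def blk_def by auto
    have "Op x (lamp x) (?s + dd) = x (?s + dd)"
      using Op_lampos[OF s(1), of dd "lamp x"] s(2) bt unfolding dd_def[symmetric]
      by (auto simp: LO_def getbit_def lamp_def bv_def rd_def bit_def)
    then show ?thesis using k by simp
  next
    case False then show ?thesis by (simp add: Op_nonl)
  qed
qed

end


context bin begin

lemma shift_apply: "shift x k = x (k+1)" by (simp add: shift_def)

lemma blk_shift: "blk (shift x) s \<longleftrightarrow> blk x (s+1)"
  by (simp add: shift_def blk_def bit_def add_ac)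

lemma isl_shift: "isl (shift x) k \<longleftrightarrow> isl x (k+1)"
  unfolding isl_def blk_shift
  by (metis add_diff_cancel_right' diff_add_cancel diff_diff_eq2 add.commute)

lemma owner_shift: "isl x (k+1) \<Longrightarrow> owner (shift x) k = owner x (k+1) - 1"
proof -
  assume a: "isl x (k+1)"
  have e: "k - (owner x (k+1) - 1) = k + 1 - owner x (k+1)" by simp
  show ?thesis using isl_owner[OF a] by (intro owner_eq) (auto simp: blk_shift e)
qed

lemma Op_shift: "Op (shift x) F = shift (Op x (\<lambda>s. F (s - 1)))"
proof (rule ext)
  fix k
  show "Op (shift x) F k = shift (Op x (\<lambda>s. F (s - 1))) k"
  proof (cases "isl x (k+1)")
    case True
    define q where "q = owner x (k+1)"
    have o: "owner (shift x) k = q - 1" using owner_shift[OF True] q_def by simp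
    have e: "k - (q - 1) = k + 1 - q" by simp
    show ?thesis using True
      by (simp add: Op_def isl_shift shift_apply o e q_def[symmetric])
  next
    case False
    then show ?thesis by (simp add: Op_def isl_shift shift_apply)
  qed
qed

lemma lamp_shift: "lamp (shift x) s = lamp x (s+1)"
  by (rule ext) (simp add: lamp_def rd_def shift_def add_ac)

lemma head_shift: "head (shift x) s = head x (s+1)"
  by (simp add: head_def rd_def shift_def add_ac)

lemma window_local:
  assumes "\<And>j. s \<le> j \<Longrightarrow> j \<le> s + 18 \<Longrightarrow> x j = y j"
  shows "blk x s = blk y s" "lamp x s = lamp y s" "head x s = head y s"
proof -
  show "blk x s = blk y s" by (rule blk_cong) (use assms in auto)
  show "lamp x s = lamp y s"
    using assms[of "s+7"] assms[of "s+9"] assms[of "s+11"] assms[of "s+13"] assms[of "s+15"] assms[of "s+17"]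
    by (intro ext) (simp add: lamp_def rd_def)
  show "head x s = head y s"
    using assms[of "s+5"] by (simp add: head_def rd_def)
qed

lemma Op_local:
  assumes xy: "\<And>j. k - 20 \<le> j \<Longrightarrow> j \<le> k + 20 \<Longrightarrow> x j = y j"
    and FG: "\<And>s. k - 17 \<le> s \<Longrightarrow> s \<le> k - 7 \<Longrightarrow> F s = G s"
  shows "Op x F k = Op y G k"
proof -
  have bl: "blk x s = blk y s" if "k - 17 \<le> s" "s \<le> k - 7" for s
    by (rule window_local(1)) (use xy that in auto)
  have rng: "k - 17 \<le> s \<and> s \<le> k - 7" if "k - s \<in> LO" for s
    using that by (auto simp: LO_def)
  have isl: "isl x k = isl y k"
    unfolding isl_def using bl rng by blast
  show ?thesis
  proof (cases "isl x k")
    case True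
    then have o: "blk x (owner x k)" "k - owner x k \<in> LO" using isl_owner by auto
    have "blk y (owner x k)" using bl[of "owner x k"] rng[OF o(2)] o(1) by simp
    then have "owner y k = owner x k" using owner_eq o(2) by blast
    then show ?thesis using True isl FG[of "owner x k"] rng[OF o(2)] by (simp add: Op_def)
  next
    case False
    then show ?thesis using isl xy[of k] by (simp add: Op_def)
  qed
qed

definition good :: "((int \<Rightarrow> 'a) \<Rightarrow> int \<Rightarrow> bool \<Rightarrow> lv) \<Rightarrow> bool" where
  "good \<Phi> \<longleftrightarrow> (\<exists>R. \<forall>x y s. (\<forall>j. s - R \<le> j \<and> j \<le> s + R \<longrightarrow> x j = y j) \<longrightarrow> \<Phi> x s = \<Phi> y s)
     \<and> (\<forall>x s. \<Phi> (shift x) s = \<Phi> x (s+1))"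

definition M :: "((int \<Rightarrow> 'a) \<Rightarrow> int \<Rightarrow> bool \<Rightarrow> lv) \<Rightarrow> (int \<Rightarrow> 'a) \<Rightarrow> int \<Rightarrow> 'a" where
  "M \<Phi> x = Op x (\<Phi> x)"

lemma good_cont:
  assumes "good \<Phi>"
  shows "continuous_map fullshift_top fullshift_top (M \<Phi>)"
proof (rule local_cont)
  fix k
  obtain R where R: "\<And>x y s. (\<forall>j. s - R \<le> j \<and> j \<le> s + R \<longrightarrow> x j = y j) \<Longrightarrow> \<Phi> x s = \<Phi> y s"
    using assms unfolding good_def by blast
  define N where "N = \<bar>R\<bar> + 40"
  show "\<exists>N. \<forall>x y. (\<forall>i\<in>{-N..N}. x (k + i) = y (k + i)) \<longrightarrow> M \<Phi> x k = M \<Phi> y k"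
  proof (intro exI allI impI)
    fix x y :: "int \<Rightarrow> 'a"
    assume h: "\<forall>i\<in>{-N..N}. x (k + i) = y (k + i)"
    have h': "x j = y j" if "k - N \<le> j" "j \<le> k + N" for j
      using h[rule_format, of "j - k"] that by auto
    show "M \<Phi> x k = M \<Phi> y k"
      unfolding M_def
    proof (rule Op_local)
      fix j assume "k - 20 \<le> j" "j \<le> k + 20" then show "x j = y j" using h' N_def by auto
    next
      fix s assume "k - 17 \<le> s" "s \<le> k - 7"
      then show "\<Phi> x s = \<Phi> y s" using R[of s x y] h' N_def by auto
    qed
  qed
qed

lemma good_shift:
  assumes "good \<Phi>"
  shows "M \<Phi> \<circ> shift = shift \<circ> M \<Phi>"
proof (rule ext)
  fix x
  have "\<Phi> (shift x) = (\<lambda>s. \<Phi> x (s+1))" using assms unfolding good_def by auto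
  then show "(M \<Phi> \<circ> shift) x = (shift \<circ> M \<Phi>) x"
    by (simp add: M_def Op_shift)
qed

end



lemma in_aut:
  assumes "continuous_map fullshift_top fullshift_top f" "continuous_map fullshift_top fullshift_top g"
    "f \<circ> g = id" "g \<circ> f = id" "f \<circ> shift = shift \<circ> f"
  shows "f \<in> carrier aut_shift"
proof -
  have "homeomorphic_maps fullshift_top fullshift_top f g"
    unfolding homeomorphic_maps_def using assms by (auto simp: fun_eq_iff)
  then have "homeomorphic_map fullshift_top fullshift_top f"
    using homeomorphic_maps_imp_map by blast
  then show ?thesis using assms(5) by (simp add: aut_shift_def)
qed

context bin begin

definition Phg :: "(lv \<Rightarrow> lv) \<Rightarrow> (int \<Rightarrow> 'a) \<Rightarrow> int \<Rightarrow> bool \<Rightarrow> lv" where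
  "Phg p x s tb = (if tb \<and> head x s then p (lamp x s tb) else lamp x s tb)"

definition Ph1 :: "(int \<Rightarrow> 'a) \<Rightarrow> int \<Rightarrow> bool \<Rightarrow> lv" where
  "Ph1 x s tb = lamp x s (\<not> tb)"

definition Ph2 :: "(int \<Rightarrow> 'a) \<Rightarrow> int \<Rightarrow> bool \<Rightarrow> lv" where
  "Ph2 x s tb = (if tb then (if blk x (s-19) then lamp x (s-19) False else lamp x s True)
                 else (if blk x (s+19) then lamp x (s+19) True else lamp x s False))"

lemma wl_shifted:
  assumes "\<forall>j. s - 40 \<le> j \<and> j \<le> s + 40 \<longrightarrow> x j = y j" "-21 \<le> d" "d \<le> 21"
  shows "blk x (s+d) = blk y (s+d)" "lamp x (s+d) = lamp y (s+d)" "head x (s+d) = head y (s+d)"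
  using window_local[of "s+d" x y] assms by auto

lemma good_Phg: "good (Phg p)"
  unfolding good_def
proof (intro conjI exI allI impI)
  fix x y :: "int \<Rightarrow> 'a" and s
  assume "\<forall>j. s - 40 \<le> j \<and> j \<le> s + 40 \<longrightarrow> x j = y j"
  then show "Phg p x s = Phg p y s" using wl_shifted[of s x y 0] by (simp add: Phg_def fun_eq_iff)
next
  fix x :: "int \<Rightarrow> 'a" and s
  show "Phg p (shift x) s = Phg p x (s + 1)" by (simp add: Phg_def fun_eq_iff lamp_shift head_shift)
qed

lemma good_Ph1: "good Ph1"
  unfolding good_def
proof (intro conjI exI allI impI)
  fix x y :: "int \<Rightarrow> 'a" and s
  assume "\<forall>j. s - 40 \<le> j \<and> j \<le> s + 40 \<longrightarrow> x j = y j"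
  then show "Ph1 x s = Ph1 y s" using wl_shifted[of s x y 0] by (simp add: Ph1_def fun_eq_iff)
next
  fix x :: "int \<Rightarrow> 'a" and s
  show "Ph1 (shift x) s = Ph1 x (s + 1)" by (simp add: Ph1_def fun_eq_iff lamp_shift)
qed

lemma good_Ph2: "good Ph2"
  unfolding good_def
proof (intro conjI exI allI impI)
  fix x y :: "int \<Rightarrow> 'a" and s
  assume h: "\<forall>j. s - 40 \<le> j \<and> j \<le> s + 40 \<longrightarrow> x j = y j"
  have a: "blk x (s-19) = blk y (s-19)" "lamp x (s-19) = lamp y (s-19)"
    using wl_shifted[OF h, of "-19"] by auto
  have b: "blk x (s+19) = blk y (s+19)" "lamp x (s+19) = lamp y (s+19)"
    using wl_shifted[OF h, of "19"] by auto
  have c: "lamp x s = lamp y s" using wl_shifted[OF h, of 0] by auto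
  show "Ph2 x s = Ph2 y s" using a b c by (simp add: Ph2_def fun_eq_iff)
next
  fix x :: "int \<Rightarrow> 'a" and s
  have e: "s - 19 + 1 = s + 1 - (19::int)" "s + 19 + 1 = s + 1 + (19::int)" by simp_all
  show "Ph2 (shift x) s = Ph2 x (s + 1)" by (simp add: Ph2_def fun_eq_iff lamp_shift blk_shift e)
qed

definition gate where "gate p = M (Phg p)"
definition s1 where "s1 = M Ph1"
definition s2 where "s2 = M Ph2"

lemma gate_comp: "gate p (gate q x) = gate (p \<circ> q) x"
  unfolding gate_def M_def Op_Op
  by (rule Op_cong) (simp add: Phg_def fun_eq_iff lamp_Op head_Op)

lemma gate_id: "gate id x = x"
  unfolding gate_def M_def
  by (subst (2) Op_lamp[symmetric], rule Op_cong) (simp add: Phg_def fun_eq_iff)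

lemma s1_s1: "s1 (s1 x) = x"
  unfolding s1_def M_def Op_Op
  by (subst (2) Op_lamp[symmetric], rule Op_cong) (simp add: Ph1_def fun_eq_iff lamp_Op)

lemma s2_s2: "s2 (s2 x) = x"
  unfolding s2_def M_def Op_Op
proof (subst (2) Op_lamp[symmetric], rule Op_cong)
  fix s assume b: "blk x s"
  show "Ph2 (Op x (Ph2 x)) s = lamp x s"
  proof (rule ext)
    fix tb
    show "Ph2 (Op x (Ph2 x)) s tb = lamp x s tb"
    proof (cases tb)
      case True
      then show ?thesis using b by (cases "blk x (s-19)") (auto simp: Ph2_def blk_Op lamp_Op)
    next
      case False
      then show ?thesis using b by (cases "blk x (s+19)") (auto simp: Ph2_def blk_Op lamp_Op)
    qed
  qed
qed

lemma gate_aut: "bij p \<Longrightarrow> gate p \<in> carrier aut_shift"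
proof -
  assume bp: "bij p"
  have i1: "p \<circ> inv_into UNIV p = id" "inv_into UNIV p \<circ> p = id"
    using surj_iff[of p] inj_iff[of p] bij_is_surj[OF bp] bij_is_inj[OF bp] by auto
  show ?thesis
  proof (rule in_aut[where g = "gate (inv_into UNIV p)"])
    show "continuous_map fullshift_top fullshift_top (gate p)" unfolding gate_def by (rule good_cont[OF good_Phg])
    show "continuous_map fullshift_top fullshift_top (gate (inv_into UNIV p))" unfolding gate_def by (rule good_cont[OF good_Phg])
    show "gate p \<circ> gate (inv_into UNIV p) = id" by (rule ext) (simp add: gate_comp i1 gate_id)
    show "gate (inv_into UNIV p) \<circ> gate p = id" by (rule ext) (simp add: gate_comp i1 gate_id)
    show "gate p \<circ> shift = shift \<circ> gate p" unfolding gate_def by (rule good_shift[OF good_Phg])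
  qed
qed

lemma s1_aut: "s1 \<in> carrier aut_shift"
  by (rule in_aut[where g = s1]) (simp_all add: s1_def good_cont good_Ph1 good_shift fun_eq_iff s1_s1[unfolded s1_def])

lemma s2_aut: "s2 \<in> carrier aut_shift"
  by (rule in_aut[where g = s2]) (simp_all add: s2_def good_cont good_Ph2 good_shift fun_eq_iff s2_s2[unfolded s2_def])

end



definition Nexp :: nat where "Nexp = fact (CARD(lv \<Rightarrow> lv))"

lemma perm_exp:
  fixes p :: "lv \<Rightarrow> lv"
  assumes bp: "bij p"
  shows "p ^^ Nexp = id"
proof -
  define M where "M = CARD(lv \<Rightarrow> lv)"
  have "\<not> inj_on (\<lambda>n. p ^^ n) {0..M}"
  proof
    assume "inj_on (\<lambda>n. p ^^ n) {0..M}"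
    then have "card {0..M} \<le> card (UNIV :: (lv \<Rightarrow> lv) set)"
      by (rule card_inj_on_le) auto
    then show False by (simp add: M_def)
  qed
  then obtain a b where ab: "a \<in> {0..M}" "b \<in> {0..M}" "a \<noteq> b" "p ^^ a = p ^^ b"
    unfolding inj_on_def by blast
  have key: "\<exists>d. 1 \<le> d \<and> d \<le> M \<and> p ^^ d = id" if "a < b" "a \<le> M" "b \<le> M" "p ^^ a = p ^^ b" for a b
  proof -
    have bij_a: "bij (p ^^ a)" using bij_betw_funpow[OF bp] by simp
    have "p ^^ (b - a) \<circ> p ^^ a = p ^^ (b - a + a)" by (simp only: funpow_add)
    also have "b - a + a = b" using that by simp
    finally have e: "p ^^ (b - a) \<circ> p ^^ a = id \<circ> p ^^ a" using that(4) by (metis id_comp)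
    have "p ^^ (b - a) = id"
    proof (rule ext)
      fix z
      obtain w where w: "z = (p ^^ a) w" using bij_a by (metis bij_pointE)
      show "(p ^^ (b - a)) z = id z" using fun_cong[OF e, of w] w by simp
    qed
    then show ?thesis using that by (intro exI[of _ "b - a"]) auto
  qed
  obtain d where d: "1 \<le> d" "d \<le> M" "p ^^ d = id"
    using ab key[of a b] key[of b a] by (cases "a < b") (auto simp: linorder_neq_iff)
  have "d dvd fact M" by (rule dvd_fact) (use d in auto)
  then obtain k where k: "fact M = d * k" by (metis dvdE of_nat_fact)
  have "p ^^ Nexp = (p ^^ d) ^^ k" unfolding Nexp_def M_def[symmetric] k funpow_mult ..
  also have "\<dots> = id" using d(3) by simp
  finally show ?thesis .
qed

context bin begin

definition sk where "sk x = Op x (\<lambda>_ _. (False, False, False))"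

lemma sk_Op: "sk (Op x F) = sk x" unfolding sk_def Op_Op ..
lemma blk_sk: "blk (sk x) s = blk x s" unfolding sk_def blk_Op ..
lemma head_sk: "blk x s \<Longrightarrow> head (sk x) s = head x s" unfolding sk_def by (rule head_Op)

definition cwP where
  "cwP P c \<longleftrightarrow> (\<forall>I s tb. bij (P I s tb)) \<and> (\<forall>x. c x = Op x (\<lambda>s tb. P (sk x) s tb (lamp x s tb)))"

definition cw where "cw c \<longleftrightarrow> (\<exists>P. cwP P c)"

lemma cwP_Op: "cwP P c \<Longrightarrow> c (Op x F) = Op x (\<lambda>s tb. P (sk x) s tb (F s tb))"
  unfolding cwP_def by (auto simp: Op_Op sk_Op lamp_Op intro!: Op_cong)

lemma cw_comp:
  assumes "cw c" "cw d" shows "cw (c \<circ> d)"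
proof -
  obtain P Q where P: "cwP P c" and Q: "cwP Q d" using assms unfolding cw_def by blast
  have "cwP (\<lambda>I s tb. P I s tb \<circ> Q I s tb) (c \<circ> d)"
    unfolding cwP_def
  proof (intro conjI allI)
    fix I s tb show "bij (P I s tb \<circ> Q I s tb)" using P Q unfolding cwP_def by (auto intro: bij_comp)
  next
    fix x
    have "d x = Op x (\<lambda>s tb. Q (sk x) s tb (lamp x s tb))" using Q unfolding cwP_def by auto
    then show "(c \<circ> d) x = Op x (\<lambda>s tb. (P (sk x) s tb \<circ> Q (sk x) s tb) (lamp x s tb))"
      using cwP_Op[OF P] by simp
  qed
  then show ?thesis unfolding cw_def by blast
qed

lemma cw_inv:
  assumes "cw c" shows "\<exists>c'. cw c' \<and> c' \<circ> c = id \<and> c \<circ> c' = id"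
proof -
  obtain P where P: "cwP P c" using assms unfolding cw_def by blast
  define c' where "c' x = Op x (\<lambda>s tb. inv_into UNIV (P (sk x) s tb) (lamp x s tb))" for x
  have bP: "bij (P I s tb)" for I s tb using P unfolding cwP_def by auto
  have P': "cwP (\<lambda>I s tb. inv_into UNIV (P I s tb)) c'"
    unfolding cwP_def c'_def using bP by (auto intro: bij_imp_bij_inv)
  have "c' \<circ> c = id"
  proof (rule ext)
    fix x
    have "c' (c x) = Op x (\<lambda>s tb. inv_into UNIV (P (sk x) s tb) (P (sk x) s tb (lamp x s tb)))"
      using P cwP_Op[OF P'] unfolding cwP_def by auto
    also have "\<dots> = Op x (lamp x)" using bP by (simp add: bij_is_inj)
    finally show "(c' \<circ> c) x = id x" by (simp add: Op_lamp)
  qed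
  moreover have "c \<circ> c' = id"
  proof (rule ext)
    fix x
    have "c (c' x) = Op x (\<lambda>s tb. P (sk x) s tb (inv_into UNIV (P (sk x) s tb) (lamp x s tb)))"
      using P' cwP_Op[OF P] unfolding cwP_def by auto
    also have "\<dots> = Op x (lamp x)" using bP by (simp add: bij_is_surj f_inv_into_f)
    finally show "(c \<circ> c') x = id x" by (simp add: Op_lamp)
  qed
  ultimately show ?thesis using P' unfolding cw_def by blast
qed

lemma cw_pow_aux:
  assumes P: "cwP P c"
  shows "(c ^^ n) x = Op x (\<lambda>s tb. (P (sk x) s tb ^^ n) (lamp x s tb))"
proof (induction n)
  case 0 then show ?case by (simp add: Op_lamp)
next
  case (Suc n) then show ?case by (simp add: cwP_Op[OF P])
qed

lemma cw_exp:
  assumes "cw c" shows "c ^^ Nexp = id"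
proof (rule ext)
  fix x
  obtain P where P: "cwP P c" using assms unfolding cw_def by blast
  have bP: "bij (P I s tb)" for I s tb using P unfolding cwP_def by auto
  show "(c ^^ Nexp) x = id x"
    using cw_pow_aux[OF P, of Nexp x] perm_exp[OF bP] by (simp add: Op_lamp)
qed

lemma cw_gate: "bij p \<Longrightarrow> cw (gate p)"
  unfolding cw_def
proof (intro exI[of _ "\<lambda>I s tb. if tb \<and> head I s then p else id"])
  assume bp: "bij p"
  show "cwP (\<lambda>I s tb. if tb \<and> head I s then p else id) (gate p)"
    unfolding cwP_def
  proof (intro conjI allI)
    fix I s tb show "bij (if tb \<and> head I s then p else id)" using bp by simp
  next
    fix x show "gate p x = Op x (\<lambda>s tb. (if tb \<and> head (sk x) s then p else id) (lamp x s tb))"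
      unfolding gate_def M_def by (rule Op_cong) (auto simp: Phg_def head_sk fun_eq_iff)
  qed
qed

lemma cw_conj_s1:
  assumes "cw c" shows "cw (s1 \<circ> c \<circ> s1)"
proof -
  obtain P where P: "cwP P c" using assms unfolding cw_def by blast
  have "cwP (\<lambda>I s tb. P I s (\<not> tb)) (s1 \<circ> c \<circ> s1)"
    unfolding cwP_def
  proof (intro conjI allI)
    fix I s tb show "bij (P I s (\<not> tb))" using P unfolding cwP_def by auto
  next
    fix x
    have "c (s1 x) = Op x (\<lambda>s tb. P (sk x) s tb (Ph1 x s tb))"
      unfolding s1_def M_def by (rule cwP_Op[OF P])
    then show "(s1 \<circ> c \<circ> s1) x = Op x (\<lambda>s tb. P (sk x) s (\<not> tb) (lamp x s tb))"
      by (auto simp: s1_def M_def Op_Op Ph1_def lamp_Op intro!: Op_cong)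
  qed
  then show ?thesis unfolding cw_def by blast
qed

lemma cw_conj_s2:
  assumes "cw c" shows "cw (s2 \<circ> c \<circ> s2)"
proof -
  obtain P where P: "cwP P c" using assms unfolding cw_def by blast
  define P' where "P' I s tb = (if tb then (if blk I (s-19) then P I (s-19) False else P I s True)
      else (if blk I (s+19) then P I (s+19) True else P I s False))" for I s tb
  have "cwP P' (s2 \<circ> c \<circ> s2)"
    unfolding cwP_def
  proof (intro conjI allI)
    fix I s tb show "bij (P' I s tb)" using P unfolding cwP_def P'_def by auto
  next
    fix x
    have e: "c (s2 x) = Op x (\<lambda>s tb. P (sk x) s tb (Ph2 x s tb))"
      unfolding s2_def M_def by (rule cwP_Op[OF P])
    show "(s2 \<circ> c \<circ> s2) x = Op x (\<lambda>s tb. P' (sk x) s tb (lamp x s tb))"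
      unfolding o_def e
      unfolding s2_def M_def Op_Op
    proof (rule Op_cong, rule ext)
      fix s tb assume b: "blk x s"
      show "Ph2 (Op x (\<lambda>s tb. P (sk x) s tb (Ph2 x s tb))) s tb = P' (sk x) s tb (lamp x s tb)"
      proof (cases tb)
        case True
        then show ?thesis using b
          by (cases "blk x (s-19)") (auto simp: Ph2_def P'_def blk_Op lamp_Op blk_sk)
      next
        case False
        then show ?thesis using b
          by (cases "blk x (s+19)") (auto simp: Ph2_def P'_def blk_Op lamp_Op blk_sk)
      qed
    qed
  qed
  then show ?thesis unfolding cw_def by blast
qed

end



lemma aut_mult[simp]: "f \<otimes>\<^bsub>aut_shift\<^esub> g = f \<circ> g" and aut_one[simp]: "\<one>\<^bsub>aut_shift\<^esub> = id"
  by (simp_all add: aut_shift_def)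

lemma aut_carrier: "f \<in> carrier aut_shift \<longleftrightarrow> homeomorphic_map fullshift_top fullshift_top f \<and> f \<circ> shift = shift \<circ> f"
  by (simp add: aut_shift_def)

lemma group_aut: "group (aut_shift :: ((int \<Rightarrow> 'a) \<Rightarrow> (int \<Rightarrow> 'a)) monoid)"
proof (rule groupI)
  fix x y :: "(int \<Rightarrow> 'a) \<Rightarrow> int \<Rightarrow> 'a" assume "x \<in> carrier aut_shift" "y \<in> carrier aut_shift"
  then show "x \<otimes>\<^bsub>aut_shift\<^esub> y \<in> carrier aut_shift"
    by (auto simp: aut_carrier intro: homeomorphic_map_compose) (metis comp_assoc)
next
  show "\<one>\<^bsub>aut_shift\<^esub> \<in> carrier aut_shift" by (simp add: aut_carrier)
next
  fix x y z :: "(int \<Rightarrow> 'a) \<Rightarrow> int \<Rightarrow> 'a" show "x \<otimes>\<^bsub>aut_shift\<^esub> y \<otimes>\<^bsub>aut_shift\<^esub> z = x \<otimes>\<^bsub>aut_shift\<^esub> (y \<otimes>\<^bsub>aut_shift\<^esub> z)"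
    by (simp add: comp_assoc)
next
  fix x :: "(int \<Rightarrow> 'a) \<Rightarrow> int \<Rightarrow> 'a" show "\<one>\<^bsub>aut_shift\<^esub> \<otimes>\<^bsub>aut_shift\<^esub> x = x" by simp
next
  fix x :: "(int \<Rightarrow> 'a) \<Rightarrow> int \<Rightarrow> 'a" assume x: "x \<in> carrier aut_shift"
  then obtain g where g: "homeomorphic_maps fullshift_top fullshift_top x g"
    using homeomorphic_map_maps aut_carrier by blast
  then have gh: "homeomorphic_map fullshift_top fullshift_top g" "\<forall>y. g (x y) = y" "\<forall>y. x (g y) = y"
    using g unfolding homeomorphic_maps_map by auto
  have "g \<circ> shift = shift \<circ> g"
  proof (rule ext)
    fix y
    have xs: "x \<circ> shift = shift \<circ> x" using x by (simp add: aut_carrier)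
    have "x (shift (g y)) = shift (x (g y))" using fun_cong[OF xs, of "g y"] by simp
    then have "g (x (shift (g y))) = g (shift y)" using gh by simp
    then show "(g \<circ> shift) y = (shift \<circ> g) y" using gh by simp
  qed
  then show "\<exists>y\<in>carrier aut_shift. y \<otimes>\<^bsub>aut_shift\<^esub> x = \<one>\<^bsub>aut_shift\<^esub>"
    using gh by (intro bexI[of _ g]) (auto simp: aut_carrier fun_eq_iff)
qed

lemma aut_inv:
  assumes "f \<in> carrier aut_shift"
  shows "inv\<^bsub>aut_shift\<^esub> f \<circ> f = id" "f \<circ> inv\<^bsub>aut_shift\<^esub> f = id"
  using group.l_inv[OF group_aut assms] group.r_inv[OF group_aut assms] by simp_all

lemma aut_inv_unique:
  assumes "f \<in> carrier aut_shift" "f \<circ> g = id"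
  shows "inv\<^bsub>aut_shift\<^esub> f = g"
proof -
  have "inv\<^bsub>aut_shift\<^esub> f = (inv\<^bsub>aut_shift\<^esub> f \<circ> f) \<circ> g" using assms(2) by (simp add: comp_assoc)
  then show ?thesis using aut_inv(1)[OF assms(1)] by simp
qed




definition tpw :: "('b \<Rightarrow> 'b) \<Rightarrow> ('b \<Rightarrow> 'b) \<Rightarrow> int \<Rightarrow> 'b \<Rightarrow> 'b" where
  "tpw t ti n = (if 0 \<le> n then t ^^ nat n else ti ^^ nat (-n))"

lemma tpw_succ:
  assumes A: "t \<circ> ti = id" "ti \<circ> t = id"
  shows "tpw t ti (n+1) = t \<circ> tpw t ti n" "tpw t ti (n-1) = ti \<circ> tpw t ti n"
proof -
  show "tpw t ti (n+1) = t \<circ> tpw t ti n"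
  proof (cases "0 \<le> n")
    case True
    then have e: "nat (n+1) = Suc (nat n)" by simp
    have "tpw t ti (n+1) = t ^^ Suc (nat n)" using True e by (simp add: tpw_def)
    also have "\<dots> = t \<circ> t ^^ nat n" by (rule funpow.simps(2))
    finally show ?thesis using True by (simp add: tpw_def)
  next
    case False
    define m where "m = nat (-(n+1))"
    have nn: "nat (-n) = Suc m" using False by (simp add: m_def)
    have tn: "tpw t ti n = ti ^^ Suc m" using False nn by (simp add: tpw_def del: funpow.simps)
    have tn1: "tpw t ti (n+1) = ti ^^ m"
      using False by (cases "n + 1 = 0") (simp_all add: tpw_def m_def)
    have "t \<circ> ti ^^ Suc m = (t \<circ> ti) \<circ> ti ^^ m" by (simp only: funpow.simps(2) comp_assoc)
    then show ?thesis using tn tn1 A(1) by (simp del: funpow.simps)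
  qed
  show "tpw t ti (n-1) = ti \<circ> tpw t ti n"
  proof (cases "n \<le> 0")
    case True
    then have e: "nat (-(n-1)) = Suc (nat (-n))" by simp
    have "tpw t ti (n-1) = ti ^^ Suc (nat (-n))" using True e by (simp add: tpw_def)
    also have "\<dots> = ti \<circ> ti ^^ nat (-n)" by (rule funpow.simps(2))
    finally show ?thesis using True by (cases "n = 0") (simp_all add: tpw_def)
  next
    case False
    define m where "m = nat (n-1)"
    have nn: "nat n = Suc m" using False by (simp add: m_def)
    have tn: "tpw t ti n = t ^^ Suc m" using False nn by (simp add: tpw_def del: funpow.simps)
    have tn1: "tpw t ti (n-1) = t ^^ m"
      using False by (simp add: tpw_def m_def)
    have "ti \<circ> t ^^ Suc m = (ti \<circ> t) \<circ> t ^^ m" by (simp only: funpow.simps(2) comp_assoc)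
    then show ?thesis using tn tn1 A(2) by (simp del: funpow.simps)
  qed
qed


lemma tpw_add:
  assumes "t \<circ> ti = id" "ti \<circ> t = id"
  shows "tpw t ti (a+b) = tpw t ti a \<circ> tpw t ti b"
proof (induction a rule: int_induct[where k=0])
  case base then show ?case by (simp add: tpw_def)
next
  case (step1 i)
  have "tpw t ti (i + 1 + b) = tpw t ti ((i + b) + 1)" by (simp add: algebra_simps)
  also have "\<dots> = t \<circ> tpw t ti (i + b)" by (rule tpw_succ(1)[OF assms])
  also have "\<dots> = tpw t ti (i+1) \<circ> tpw t ti b" using step1 tpw_succ(1)[OF assms, of i] by (simp add: comp_assoc del: comp_apply)
  finally show ?case .
next
  case (step2 i)
  have "tpw t ti (i - 1 + b) = tpw t ti ((i + b) - 1)" by (simp add: algebra_simps)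
  also have "\<dots> = ti \<circ> tpw t ti (i + b)" by (rule tpw_succ(2)[OF assms])
  also have "\<dots> = tpw t ti (i-1) \<circ> tpw t ti b" using step2 tpw_succ(2)[OF assms, of i] by (simp add: comp_assoc del: comp_apply)
  finally show ?case .
qed




context bin begin

definition tt where "tt = s2 \<circ> s1"
definition ti where "ti = s1 \<circ> s2"
definition tp where "tp = tpw tt ti"

lemma tt_ti: "tt \<circ> ti = id" "ti \<circ> tt = id"
  by (auto simp: tt_def ti_def fun_eq_iff s1_s1 s2_s2)

lemma tp_add: "tp (a+b) = tp a \<circ> tp b" unfolding tp_def by (rule tpw_add[OF tt_ti])
lemma tp_add_pt: "tp a (tp b x) = tp (a+b) x" using tp_add by simp
lemma tp_0[simp]: "tp 0 = id" by (simp add: tp_def tpw_def)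
lemma tp_0_pt[simp]: "tp 0 x = x" by simp
lemma tp_1: "tp 1 = tt" by (simp add: tp_def tpw_def)
lemma tp_m1: "tp (-1) = ti" by (simp add: tp_def tpw_def)

lemma cw_id: "cw id"
proof -
  have "gate id = id" by (rule ext) (simp add: gate_id)
  then show ?thesis using cw_gate[of id] by simp
qed

lemma cw_conj_tp: "cw c \<Longrightarrow> cw (tp k \<circ> c \<circ> tp (-k))"
proof (induction k arbitrary: c rule: int_induct[where k=0])
  case base then show ?case by simp
next
  case (step1 i)
  have e: "tp (i+1) \<circ> c \<circ> tp (-(i+1)) = s2 \<circ> (s1 \<circ> (tp i \<circ> c \<circ> tp (-i)) \<circ> s1) \<circ> s2"
  proof -
    have a: "tp (i+1) = tt \<circ> tp i" using tp_add[of 1 i] tp_1 by (simp add: add.commute)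
    have b: "tp (-(i+1)) = tp (-i) \<circ> ti" using tp_add[of "-i" "-1"] tp_m1 by simp
    show ?thesis unfolding a b tt_def ti_def by (simp add: comp_assoc)
  qed
  have h1: "cw (tp i \<circ> c \<circ> tp (-i))" using step1 by blast
  have "cw (s2 \<circ> (s1 \<circ> (tp i \<circ> c \<circ> tp (- i)) \<circ> s1) \<circ> s2)" by (intro cw_conj_s2 cw_conj_s1 h1)
  then show ?case unfolding e .
next
  case (step2 i)
  have e: "tp (i-1) \<circ> c \<circ> tp (-(i-1)) = s1 \<circ> (s2 \<circ> (tp i \<circ> c \<circ> tp (-i)) \<circ> s2) \<circ> s1"
  proof -
    have a: "tp (i-1) = ti \<circ> tp i" using tp_add[of "-1" i] tp_m1 by simp
    have b: "tp (-(i-1)) = tp (-i) \<circ> tt" using tp_add[of "-i" 1] tp_1 by simp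
    show ?thesis unfolding a b tt_def ti_def by (simp add: comp_assoc)
  qed
  have h1: "cw (tp i \<circ> c \<circ> tp (-i))" using step2 by blast
  have "cw (s1 \<circ> (s2 \<circ> (tp i \<circ> c \<circ> tp (- i)) \<circ> s2) \<circ> s1)" by (intro cw_conj_s2 cw_conj_s1 h1)
  then show ?case unfolding e .
qed

end



definition uw :: "(bool \<times> bool) list" where "uw = [(True,True),(False,True),(True,False),(False,False)]"

lemma reduced_rep: "reduced_word (concat (replicate n uw)) \<and> (concat (replicate n uw) = [] \<or> hd (concat (replicate n uw)) = (True,True))"
proof (induction n)
  case 0 then show ?case by simp
next
  case (Suc n)
  then show ?case
    by (cases "concat (replicate n uw)") (auto simp: uw_def)
qed

lemma autH_mult[simp]: "x \<otimes>\<^bsub>aut_shift\<lparr>carrier := X\<rparr>\<^esub> y = x \<circ> y"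
  and autH_one[simp]: "\<one>\<^bsub>aut_shift\<lparr>carrier := X\<rparr>\<^esub> = id"
  by (simp_all add: aut_shift_def)

context bin begin

definition Gens where "Gens = insert tt (gate ` {p. bij p})"
definition Hg where "Hg = generate aut_shift Gens"

lemma tt_aut: "tt \<in> carrier aut_shift"
  using monoid.m_closed[OF group.is_monoid[OF group_aut] s2_aut s1_aut] by (simp add: tt_def)

lemma Gens_carrier: "Gens \<subseteq> carrier aut_shift"
  using tt_aut gate_aut by (auto simp: Gens_def)

lemma Gens_finite: "finite Gens"
  by (simp add: Gens_def)

lemma Hg_subgroup: "subgroup Hg aut_shift"
  unfolding Hg_def by (rule group.generate_is_subgroup[OF group_aut Gens_carrier])

lemma Hg_carrier: "f \<in> Hg \<Longrightarrow> f \<in> carrier aut_shift"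
  using subgroup.subset[OF Hg_subgroup] by blast

definition inC where "inC f \<longleftrightarrow> (\<exists>k c. cw c \<and> f = tp k \<circ> c)"

lemma inv_tt: "inv\<^bsub>aut_shift\<^esub> tt = ti"
  by (rule aut_inv_unique[OF tt_aut tt_ti(1)])

lemma inv_gate: "bij p \<Longrightarrow> inv\<^bsub>aut_shift\<^esub> (gate p) = gate (inv_into UNIV p)"
proof (rule aut_inv_unique[OF gate_aut])
  assume bp: "bij p"
  have "p \<circ> inv_into UNIV p = id"
    using surj_iff[of p] bij_is_surj[OF bp] by auto
  then show "gate p \<circ> gate (inv_into UNIV p) = id"
    by (intro ext) (simp add: gate_comp gate_id)
qed

lemma Hg_C: "f \<in> Hg \<Longrightarrow> inC f"
  unfolding Hg_def
proof (induction rule: generate.induct)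
  case one then show ?case unfolding inC_def using cw_id by (intro exI[of _ 0] exI[of _ id]) simp
next
  case (incl h)
  then show ?case
  proof (cases "h = tt")
    case True then show ?thesis unfolding inC_def using cw_id tp_1 by (intro exI[of _ 1] exI[of _ id]) simp
  next
    case False
    then obtain p where "bij p" "h = gate p" using incl by (auto simp: Gens_def)
    then show ?thesis unfolding inC_def using cw_gate by (intro exI[of _ 0] exI[of _ h]) simp
  qed
next
  case (inv h)
  then show ?case
  proof (cases "h = tt")
    case True then show ?thesis unfolding inC_def using cw_id tp_m1 inv_tt by (intro exI[of _ "-1"] exI[of _ id]) simp
  next
    case False
    then obtain p where p: "bij p" "h = gate p" using inv by (auto simp: Gens_def)
    then show ?thesis unfolding inC_def using cw_gate[OF bij_imp_bij_inv[OF p(1)]] inv_gate[OF p(1)]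
      by (intro exI[of _ 0] exI[of _ "gate (inv_into UNIV p)"]) simp
  qed
next
  case (eng h1 h2)
  obtain a c where ac: "cw c" "h1 = tp a \<circ> c" using eng(3) unfolding inC_def by blast
  obtain b d where bd: "cw d" "h2 = tp b \<circ> d" using eng(4) unfolding inC_def by blast
  have "cw ((tp (-b) \<circ> c \<circ> tp (-(-b))) \<circ> d)" using cw_comp[OF cw_conj_tp[OF ac(1), of "-b"] bd(1)] .
  moreover have "h1 \<otimes>\<^bsub>aut_shift\<^esub> h2 = tp (a+b) \<circ> ((tp (-b) \<circ> c \<circ> tp (-(-b))) \<circ> d)"
    unfolding ac(2) bd(2) by (simp add: fun_eq_iff tp_add_pt)
  ultimately show ?case unfolding inC_def by blast
qed

lemma inv_C:
  assumes "f \<in> carrier aut_shift" "cw c" "f = tp n \<circ> c"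
  shows "\<exists>c'. cw c' \<and> inv\<^bsub>aut_shift\<^esub> f = c' \<circ> tp (-n)"
proof -
  obtain c' where c': "cw c'" "c' \<circ> c = id" "c \<circ> c' = id" using cw_inv[OF assms(2)] by blast
  have "f \<circ> (c' \<circ> tp (-n)) = id"
  proof (rule ext)
    fix x
    have "c (c' (tp (-n) x)) = tp (-n) x" using fun_cong[OF c'(3)] by simp
    then show "(f \<circ> (c' \<circ> tp (- n))) x = id x" using assms(3) by (simp add: tp_add_pt)
  qed
  then show ?thesis using aut_inv_unique[OF assms(1)] c'(1) by blast
qed

lemma comm_cw:
  assumes f: "f \<in> Hg" and g: "g \<in> Hg"
  shows "cw (f \<circ> g \<circ> inv\<^bsub>aut_shift\<^esub> f \<circ> inv\<^bsub>aut_shift\<^esub> g)"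
proof -
  obtain n c where nc: "cw c" "f = tp n \<circ> c" using Hg_C[OF f] unfolding inC_def by blast
  obtain m d where md: "cw d" "g = tp m \<circ> d" using Hg_C[OF g] unfolding inC_def by blast
  obtain c' where c': "cw c'" "inv\<^bsub>aut_shift\<^esub> f = c' \<circ> tp (-n)" using inv_C[OF Hg_carrier[OF f] nc] by blast
  obtain d' where d': "cw d'" "inv\<^bsub>aut_shift\<^esub> g = d' \<circ> tp (-m)" using inv_C[OF Hg_carrier[OF g] md] by blast
  have e: "f \<circ> g \<circ> inv\<^bsub>aut_shift\<^esub> f \<circ> inv\<^bsub>aut_shift\<^esub> g =
      (tp n \<circ> c \<circ> tp (-n)) \<circ> (tp (n+m) \<circ> d \<circ> tp (-(n+m))) \<circ> (tp (n+m) \<circ> c' \<circ> tp (-(n+m)))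
      \<circ> (tp m \<circ> d' \<circ> tp (-m))"
    unfolding c'(2) d'(2) unfolding nc(2) md(2) by (simp add: fun_eq_iff tp_add_pt)
  show ?thesis unfolding e
    by (intro cw_comp cw_conj_tp nc(1) md(1) c'(1) d'(1))
qed

lemma eval_rep:
  assumes a: "a \<in> Hg" and b: "b \<in> Hg"
  shows "eval_word (aut_shift\<lparr>carrier := Hg\<rparr>) a b (concat (replicate n uw))
     = (a \<circ> b \<circ> inv\<^bsub>aut_shift\<^esub> a \<circ> inv\<^bsub>aut_shift\<^esub> b) ^^ n"
proof -
  have ia: "inv\<^bsub>aut_shift\<lparr>carrier := Hg\<rparr>\<^esub> a = inv\<^bsub>aut_shift\<^esub> a"
    by (rule group.m_inv_consistent[OF group_aut Hg_subgroup a])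
  have ib: "inv\<^bsub>aut_shift\<lparr>carrier := Hg\<rparr>\<^esub> b = inv\<^bsub>aut_shift\<^esub> b"
    by (rule group.m_inv_consistent[OF group_aut Hg_subgroup b])
  show ?thesis
  proof (induction n)
    case 0 then show ?case by (simp add: eval_word_def)
  next
    case (Suc n)
    have "eval_word (aut_shift\<lparr>carrier := Hg\<rparr>) a b (uw @ concat (replicate n uw))
       = (a \<circ> b \<circ> inv\<^bsub>aut_shift\<^esub> a \<circ> inv\<^bsub>aut_shift\<^esub> b) \<circ> eval_word (aut_shift\<lparr>carrier := Hg\<rparr>) a b (concat (replicate n uw))"
      by (simp add: eval_word_def uw_def ia ib comp_assoc)
    then have E: "eval_word (aut_shift\<lparr>carrier := Hg\<rparr>) a b (uw @ concat (replicate n uw))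
       = (a \<circ> b \<circ> inv\<^bsub>aut_shift\<^esub> a \<circ> inv\<^bsub>aut_shift\<^esub> b) \<circ> (a \<circ> b \<circ> inv\<^bsub>aut_shift\<^esub> a \<circ> inv\<^bsub>aut_shift\<^esub> b) ^^ n"
      unfolding Suc.IH .
    have rep: "concat (replicate (Suc n) uw) = uw @ concat (replicate n uw)" by simp
    show ?case by (simp only: rep E funpow.simps(2))
  qed
qed

lemma no_free: "\<not> contains_free_group_rank2 (aut_shift\<lparr>carrier := Hg\<rparr>)"
  unfolding contains_free_group_rank2_def
proof
  assume "\<exists>a\<in>carrier (aut_shift\<lparr>carrier := Hg\<rparr>). \<exists>b\<in>carrier (aut_shift\<lparr>carrier := Hg\<rparr>).
     \<forall>w. w \<noteq> [] \<and> reduced_word w \<longrightarrow> eval_word (aut_shift\<lparr>carrier := Hg\<rparr>) a b w \<noteq> \<one>\<^bsub>aut_shift\<lparr>carrier := Hg\<rparr>\<^esub>"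
  then obtain a b where a': "a \<in> Hg" and b': "b \<in> Hg" and
    H: "\<forall>w. w \<noteq> [] \<and> reduced_word w \<longrightarrow> eval_word (aut_shift\<lparr>carrier := Hg\<rparr>) a b w \<noteq> \<one>\<^bsub>aut_shift\<lparr>carrier := Hg\<rparr>\<^esub>"
    by auto
  have "Nexp > 0" by (simp add: Nexp_def)
  then have ne: "concat (replicate Nexp uw) \<noteq> []" by (simp add: uw_def)
  have "eval_word (aut_shift\<lparr>carrier := Hg\<rparr>) a b (concat (replicate Nexp uw)) = \<one>\<^bsub>aut_shift\<lparr>carrier := Hg\<rparr>\<^esub>"
    using eval_rep[OF a' b'] cw_exp[OF comm_cw[OF a' b']] by simp
  then show False using H ne reduced_rep[of Nexp] by blast
qed

end



definition code :: "lv \<Rightarrow> nat" where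
  "code v = (if fst v then 4 else 0) + (if fst (snd v) then 2 else 0) + (if snd (snd v) then 1 else 0)"
definition dec :: "nat \<Rightarrow> lv" where
  "dec n = (n div 4 mod 2 = 1, n div 2 mod 2 = 1, n mod 2 = 1)"
definition pf :: "nat list \<Rightarrow> lv \<Rightarrow> lv" where "pf L v = dec (L ! code v)"

lemma k8: "k < (8::nat) \<Longrightarrow> k = 0 \<or> k = 1 \<or> k = 2 \<or> k = 3 \<or> k = 4 \<or> k = 5 \<or> k = 6 \<or> k = 7" by arith

lemma dec_code: "dec (code v) = v"
  by (cases v) (auto simp: dec_def code_def)

lemma code_dec: "n < 8 \<Longrightarrow> code (dec n) = n"
  by (drule k8) (auto simp: dec_def code_def)

lemma pf_dec: "k < 8 \<Longrightarrow> pf L (dec k) = dec (L ! k)"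
  by (simp add: pf_def code_dec)

lemma lv_eq:
  fixes f g :: "lv \<Rightarrow> lv"
  assumes "\<And>k. k < 8 \<Longrightarrow> f (dec k) = g (dec k)" shows "f = g"
proof (rule ext)
  fix v
  have "code v < 8" by (auto simp: code_def)
  then show "f v = g v" using assms[of "code v"] by (simp add: dec_code)
qed

definition PL :: "nat list list" where
  "PL = [[4, 1, 0, 3, 2, 5, 6, 7], [1, 2, 0, 3, 4, 5, 6, 7], [3, 1, 0, 2, 4, 5, 6, 7], [2, 3, 0, 1, 4, 5, 6, 7], [2, 1, 0, 4, 3, 5, 6, 7], [2, 4, 0, 3, 1, 5, 6, 7]]"
definition QL :: "nat list list" where
  "QL = [[2, 1, 4, 3, 0, 5, 6, 7], [2, 0, 1, 3, 4, 5, 6, 7], [2, 1, 3, 0, 4, 5, 6, 7], [2, 3, 0, 1, 4, 5, 6, 7], [2, 1, 0, 4, 3, 5, 6, 7], [2, 4, 0, 3, 1, 5, 6, 7]]"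
definition WA :: "nat list" where "WA = [3, 4, 5, 2, 2, 1]"
definition WB :: "nat list" where "WB = [0, 1, 2, 1, 0, 0]"

definition pp where "pp i = pf (PL ! i)"
definition pq where "pq i = pf (QL ! i)"

lemma i6: "i < (6::nat) \<Longrightarrow> i = 0 \<or> i = 1 \<or> i = 2 \<or> i = 3 \<or> i = 4 \<or> i = 5" by arith

lemma pp_pq: "i < 6 \<Longrightarrow> pp i \<circ> pq i = id"
  apply (rule lv_eq)
  apply (drule i6, drule k8)
  apply (elim disjE; simp add: pp_def pq_def pf_dec PL_def QL_def)
  done

lemma pq_pp: "i < 6 \<Longrightarrow> pq i \<circ> pp i = id"
  apply (rule lv_eq)
  apply (drule i6, drule k8)
  apply (elim disjE; simp add: pp_def pq_def pf_dec PL_def QL_def)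
  done

lemma W_lt: "i < 6 \<Longrightarrow> WA ! i < 6 \<and> WB ! i < 6"
  by (drule i6) (auto simp: WA_def WB_def)

lemma comm_p: "i < 6 \<Longrightarrow> pp (WA!i) \<circ> pp (WB!i) \<circ> pq (WA!i) \<circ> pq (WB!i) = pp i"
  apply (rule lv_eq)
  apply (drule i6, drule k8)
  apply (elim disjE; simp add: pp_def pq_def pf_dec PL_def QL_def WA_def WB_def)
  done

lemma comm_q: "i < 6 \<Longrightarrow> pq (WA!i) \<circ> pq (WB!i) \<circ> pp (WA!i) \<circ> pp (WB!i) = pq i"
  apply (rule lv_eq)
  apply (drule i6, drule k8)
  apply (elim disjE; simp add: pp_def pq_def pf_dec PL_def QL_def WA_def WB_def)
  done

lemma pp0: "pp 0 (dec 0) \<noteq> dec 0"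
  by (simp add: pp_def pf_def code_def PL_def dec_def)

lemma bij_pp: "i < 6 \<Longrightarrow> bij (pp i)"
  using pp_pq pq_pp o_bij by blast

lemma bij_pq: "i < 6 \<Longrightarrow> bij (pq i)"
  using pp_pq pq_pp o_bij by blast



context bin begin

definition z0 :: "int \<Rightarrow> 'a" where "z0 k = (if k mod 19 \<le> 3 \<or> k = 5 then Oo else Zz)"

lemma blk_z0: "blk z0 s \<longleftrightarrow> 19 dvd s"
proof
  assume "blk z0 s"
  then have h: "z0 (s+2) = Oo" "z0 (s+3) = Oo" "z0 (s+4) = Zz" by (simp_all add: blk_def)
  have A0: "(s+3) mod 19 \<le> 3 \<or> s = 2" using h(2) ZO by (auto simp: z0_def split: if_splits)
  have "s \<noteq> 2" using h(1) ZO by (auto simp: z0_def)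
  then have A: "(s+3) mod 19 \<le> 3" using A0 by simp
  have B: "\<not> (s+4) mod 19 \<le> 3" using h(3) ZO by (auto simp: z0_def split: if_splits)
  show "19 dvd s" using A B by presburger
next
  assume d: "19 dvd s"
  then obtain q where q: "s = 19 * q" by blast
  have m: "(s + c) mod 19 = c" if "0 \<le> c" "c < 19" for c
  proof -
    have "(s + c) mod 19 = c mod 19" unfolding q by (simp add: mod_add_left_eq[symmetric])
    then show ?thesis using that by simp
  qed
  have n: "s + c \<noteq> 5" if "c \<in> {4,6,8,10,12,14,16,18}" for c
  proof
    assume "s + c = 5"
    then have "(s + c) mod 19 = 5" by simp
    then show False using m[of c] that by auto
  qed
  have mm: "z0 (s + c) = (if c \<le> 3 then Oo else Zz)" if "c \<in> {0,1,2,3,4,6,8,10,12,14,16,18}" for c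
    using m[of c] n[of c] that unfolding z0_def by auto
  have z: "z0 s = Oo" using m[of 0] by (simp add: z0_def)
  show "blk z0 s"
    using z mm[of 1] mm[of 2] mm[of 3] mm[of 4] mm[of 6] mm[of 8] mm[of 10] mm[of 12] mm[of 14] mm[of 16] mm[of 18]
    unfolding blk_def bit_def z0_def[of "s+5"] z0_def[of "s+7"] z0_def[of "s+9"] z0_def[of "s+11"]
      z0_def[of "s+13"] z0_def[of "s+15"] z0_def[of "s+17"]
    by simp
qed

lemma head_z0: "19 dvd s \<Longrightarrow> head z0 s \<longleftrightarrow> s = 0"
proof -
  assume d: "19 dvd s"
  then obtain q where q: "s = 19 * q" by blast
  have "(s + 5) mod 19 = 5" unfolding q by simp
  then show ?thesis using ZO by (simp add: head_def rd_def z0_def)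
qed

lemma blk_z0_shift: "blk z0 s \<Longrightarrow> blk z0 (s - 19) \<and> blk z0 (s + 19)"
  by (simp add: blk_z0 dvd_diff dvd_add)


end


context bin begin
lemma M_X0: "M \<Phi> (Op z0 F) = Op z0 (\<Phi> (Op z0 F))"
  by (simp add: M_def Op_Op)

lemma s1_X0: "s1 (Op z0 F) = Op z0 (\<lambda>s tb. F s (\<not> tb))"
  unfolding s1_def M_X0 by (rule Op_cong) (simp add: Ph1_def lamp_Op fun_eq_iff)

lemma s2_X0: "s2 (Op z0 F) = Op z0 (\<lambda>s tb. if tb then F (s-19) False else F (s+19) True)"
  unfolding s2_def M_X0 by (rule Op_cong) (auto simp: Ph2_def lamp_Op blk_Op fun_eq_iff dest: blk_z0_shift)

lemma gate_X0: "gate p (Op z0 F) = Op z0 (\<lambda>s tb. if tb \<and> s = 0 then p (F s tb) else F s tb)"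
  unfolding gate_def M_X0 by (rule Op_cong) (auto simp: Phg_def lamp_Op head_Op fun_eq_iff head_z0 blk_z0)

definition sh :: "int \<Rightarrow> (int \<Rightarrow> bool \<Rightarrow> lv) \<Rightarrow> int \<Rightarrow> bool \<Rightarrow> lv" where
  "sh n F s tb = (if tb then F (s - 19*n) True else F (s + 19*n) False)"

lemma tt_X0: "tt (Op z0 F) = Op z0 (sh 1 F)"
  by (simp add: tt_def s1_X0 s2_X0) (rule arg_cong[where f="Op z0"], auto simp: sh_def fun_eq_iff)

lemma ti_X0: "ti (Op z0 F) = Op z0 (sh (-1) F)"
  by (simp add: ti_def s1_X0 s2_X0) (rule arg_cong[where f="Op z0"], auto simp: sh_def fun_eq_iff)

lemma tp_X0: "tp n (Op z0 F) = Op z0 (sh n F)"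
proof (induction n arbitrary: F rule: int_induct[where k=0])
  case base
  have "sh 0 F = F" by (auto simp: sh_def fun_eq_iff)
  then show ?case by simp
next
  case (step1 i)
  have "tp (i+1) (Op z0 F) = tt (tp i (Op z0 F))" using tp_add[of 1 i] tp_1 by (simp add: add.commute)
  also have "\<dots> = Op z0 (sh 1 (sh i F))" using step1 tt_X0 by simp
  also have "sh 1 (sh i F) = sh (i+1) F" by (auto simp: sh_def fun_eq_iff algebra_simps)
  finally show ?case .
next
  case (step2 i)
  have "tp (i-1) (Op z0 F) = ti (tp i (Op z0 F))" using tp_add[of "-1" i] tp_m1 by simp
  also have "\<dots> = Op z0 (sh (-1) (sh i F))" using step2 ti_X0 by simp
  also have "sh (-1) (sh i F) = sh (i-1) F" by (auto simp: sh_def fun_eq_iff algebra_simps)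
  finally show ?case .
qed

definition phi where "phi k p = tp k \<circ> gate p \<circ> tp (-k)"

definition upd :: "int \<Rightarrow> (lv \<Rightarrow> lv) \<Rightarrow> (int \<Rightarrow> bool \<Rightarrow> lv) \<Rightarrow> int \<Rightarrow> bool \<Rightarrow> lv" where
  "upd q p F s tb = (if tb \<and> s = q then p (F s tb) else F s tb)"

lemma phi_X0: "phi k p (Op z0 F) = Op z0 (upd (19*k) p F)"
proof -
  have "phi k p (Op z0 F) = Op z0 (sh k (\<lambda>s tb. if tb \<and> s = 0 then p (sh (-k) F s tb) else sh (-k) F s tb))"
    by (simp add: phi_def tp_X0 gate_X0)
  also have "sh k (\<lambda>s tb. if tb \<and> s = 0 then p (sh (-k) F s tb) else sh (-k) F s tb) = upd (19*k) p F"
    by (auto simp: sh_def upd_def fun_eq_iff)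
  finally show ?thesis .
qed

lemma tp_Hg: "tp k \<in> Hg"
proof (induction k rule: int_induct[where k=0])
  case base
  have "\<one>\<^bsub>aut_shift\<^esub> \<in> Hg" unfolding Hg_def by (rule generate.one)
  then show ?case by (simp add: id_def)
next
  case (step1 i)
  have tt: "tt \<in> Hg" unfolding Hg_def by (rule generate.incl) (simp add: Gens_def)
  have "tt \<otimes>\<^bsub>aut_shift\<^esub> tp i \<in> Hg" using generate.eng[of tt aut_shift Gens "tp i"] tt step1 unfolding Hg_def by blast
  moreover have "tp (i+1) = tt \<otimes>\<^bsub>aut_shift\<^esub> tp i" using tp_add[of 1 i] tp_1 by (simp add: add.commute)
  ultimately show ?case by (simp only:)
next
  case (step2 i)
  have ti: "ti \<in> Hg" unfolding Hg_def using generate.inv[of tt Gens aut_shift] inv_tt by (simp add: Gens_def)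
  have "ti \<otimes>\<^bsub>aut_shift\<^esub> tp i \<in> Hg" using generate.eng[of ti aut_shift Gens "tp i"] ti step2 unfolding Hg_def by blast
  moreover have "tp (i-1) = ti \<otimes>\<^bsub>aut_shift\<^esub> tp i" using tp_add[of "-1" i] tp_m1 by simp
  ultimately show ?case by (simp only:)
qed

lemma phi_Hg: "bij p \<Longrightarrow> phi k p \<in> Hg"
proof -
  assume bp: "bij p"
  have g: "gate p \<in> Hg" unfolding Hg_def by (rule generate.incl) (simp add: Gens_def bp)
  have "(tp k \<otimes>\<^bsub>aut_shift\<^esub> gate p) \<otimes>\<^bsub>aut_shift\<^esub> tp (-k) \<in> Hg"
    unfolding Hg_def by (intro generate.eng) (use tp_Hg g in \<open>simp_all add: Hg_def\<close>)
  then show ?thesis by (simp add: phi_def)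
qed

lemma inv_phi: "bij p \<Longrightarrow> p \<circ> q = id \<Longrightarrow> inv\<^bsub>aut_shift\<^esub> (phi k p) = phi k q"
proof (rule aut_inv_unique)
  assume "bij p" "p \<circ> q = id"
  then show "phi k p \<in> carrier aut_shift" using phi_Hg Hg_carrier by blast
  show "phi k p \<circ> phi k q = id"
    by (rule ext) (simp add: phi_def tp_add_pt gate_comp \<open>p \<circ> q = id\<close> gate_id)
qed

end


context bin begin

definition Psi :: "int \<Rightarrow> int \<Rightarrow> (lv \<Rightarrow> lv) \<Rightarrow> (lv \<Rightarrow> lv) \<Rightarrow> (int \<Rightarrow> bool \<Rightarrow> lv) \<Rightarrow> int \<Rightarrow> bool \<Rightarrow> lv" where
  "Psi i j p q F = upd (19*i) p (upd (19*j) q F)"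

lemma Psi_comp: "i \<noteq> j \<Longrightarrow> Psi i j p q (Psi i j p' q' F) = Psi i j (p \<circ> p') (q \<circ> q') F"
  by (auto simp: Psi_def upd_def fun_eq_iff)

lemma Psi_id: "Psi i j id id F = F"
  by (auto simp: Psi_def upd_def fun_eq_iff)

lemma grpG: "group (aut_shift\<lparr>carrier := Hg\<rparr>)"
  by (rule group.subgroup_imp_group[OF group_aut Hg_subgroup])

lemma not_vs: "\<not> virtually_solvable (aut_shift\<lparr>carrier := Hg\<rparr>)"
proof
  let ?G = "aut_shift\<lparr>carrier := Hg\<rparr>"
  assume "virtually_solvable ?G"
  then obtain K where K: "subgroup K ?G" and fin: "finite (rcosets\<^bsub>?G\<^esub> K)"
    and sol: "solvable (?G\<lparr>carrier := K\<rparr>)"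
    unfolding virtually_solvable_def by blast
  have KH: "K \<subseteq> Hg" using subgroup.subset[OF K] by simp
  define Phi where "Phi k = (\<lambda>\<iota>\<in>{..<6::nat}. K #>\<^bsub>?G\<^esub> phi (int k) (pp \<iota>))" for k
  have Phi_in: "Phi k \<in> PiE {..<6} (\<lambda>_. rcosets\<^bsub>?G\<^esub> K)" for k
    unfolding Phi_def restrict_PiE_iff
  proof (intro ballI)
    fix \<iota> assume "\<iota> \<in> {..<6::nat}"
    then have "phi (int k) (pp \<iota>) \<in> carrier ?G" using phi_Hg bij_pp by simp
    then show "K #>\<^bsub>?G\<^esub> phi (int k) (pp \<iota>) \<in> rcosets\<^bsub>?G\<^esub> K"
      using group.rcosetsI[OF grpG] subgroup.subset[OF K] by blast
  qed
  have "finite (PiE {..<6::nat} (\<lambda>_. rcosets\<^bsub>?G\<^esub> K))" using fin by (simp add: finite_PiE)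
  then have "\<not> inj Phi"
    using Phi_in infinite_UNIV_nat finite_imageD[of Phi UNIV] finite_subset[of "range Phi"] by blast
  then obtain i j where ij: "i \<noteq> j" "Phi i = Phi j" unfolding inj_def by blast
  have coset: "K #>\<^bsub>?G\<^esub> phi (int i) (pp \<iota>) = K #>\<^bsub>?G\<^esub> phi (int j) (pp \<iota>)" if "\<iota> < 6" for \<iota>
    using fun_cong[OF ij(2), of \<iota>] that by (simp add: Phi_def)
  let ?Psi = "Psi (int i) (int j)"
  have ij': "int i \<noteq> int j" using ij by simp
  have base: "phi (int i) (pp \<iota>) \<circ> phi (int j) (pq \<iota>) \<in> K" if "\<iota> < 6" for \<iota>
  proof -
    have ci: "phi (int i) (pp \<iota>) \<in> carrier ?G" "phi (int j) (pp \<iota>) \<in> carrier ?G"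
      using phi_Hg bij_pp that by simp_all
    have "phi (int i) (pp \<iota>) \<in> K #>\<^bsub>?G\<^esub> phi (int j) (pp \<iota>)"
      using group.repr_independenceD[OF grpG K ci(1) coset[OF that, symmetric]] .
    then have "phi (int i) (pp \<iota>) \<otimes>\<^bsub>?G\<^esub> inv\<^bsub>?G\<^esub> phi (int j) (pp \<iota>) \<in> K"
      using subgroup.rcos_module_imp[OF K grpG ci(2)] by blast
    moreover have "inv\<^bsub>?G\<^esub> phi (int j) (pp \<iota>) = phi (int j) (pq \<iota>)"
      using group.m_inv_consistent[OF group_aut Hg_subgroup, of "phi (int j) (pp \<iota>)"] ci(2)
        inv_phi[OF bij_pp[OF that] pp_pq[OF that]] by simp
    ultimately show ?thesis by simp
  qed
  have base_X0: "(phi (int i) (pp \<iota>) \<circ> phi (int j) (pq \<iota>)) (Op z0 F) = Op z0 (?Psi (pp \<iota>) (pq \<iota>) F)" for \<iota> F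
    by (simp add: phi_X0 Psi_def)
  let ?G' = "aut_shift\<lparr>carrier := K\<rparr>"
  have G'eq: "?G\<lparr>carrier := K\<rparr> = ?G'" by simp
  have grpG': "group ?G'" using group.subgroup_imp_group[OF grpG K] by simp
  have Dsub: "(derived ?G' ^^ n) K \<subseteq> K" for n
  proof (induction n)
    case 0 then show ?case by simp
  next
    case (Suc n)
    have "subgroup (derived ?G' ((derived ?G' ^^ n) K)) ?G'"
      using group.derived_is_subgroup[OF grpG'] Suc by simp
    then show ?case using subgroup.subset by fastforce
  qed
  have invK: "inv\<^bsub>?G'\<^esub> f = inv\<^bsub>aut_shift\<^esub> f" if "f \<in> K" for f
  proof -
    have "inv\<^bsub>?G\<lparr>carrier := K\<rparr>\<^esub> f = inv\<^bsub>?G\<^esub> f" by (rule group.m_inv_consistent[OF grpG K that])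
    moreover have "inv\<^bsub>?G\<^esub> f = inv\<^bsub>aut_shift\<^esub> f"
      by (rule group.m_inv_consistent[OF group_aut Hg_subgroup]) (use KH that in auto)
    ultimately show ?thesis by simp
  qed
  have inv_X0: "(inv\<^bsub>aut_shift\<^esub> f) (Op z0 F) = Op z0 (?Psi q p F)"
    if "f \<in> K" "\<And>F. f (Op z0 F) = Op z0 (?Psi p q F)" "p \<circ> q = id" "q \<circ> p = id" for f p q F
  proof -
    have fc: "f \<in> carrier aut_shift" using that(1) KH Hg_carrier by blast
    have "f (Op z0 (?Psi q p F)) = Op z0 F" using that(2)[of "?Psi q p F"] Psi_comp[OF ij'] that(3) that(4) Psi_id by simp
    then have "(inv\<^bsub>aut_shift\<^esub> f) (f (Op z0 (?Psi q p F))) = (inv\<^bsub>aut_shift\<^esub> f) (Op z0 F)" by simp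
    then show ?thesis using fun_cong[OF aut_inv(1)[OF fc]] by simp
  qed
  have claim: "\<forall>\<iota><6. \<exists>f\<in>(derived ?G' ^^ n) K. \<forall>F. f (Op z0 F) = Op z0 (?Psi (pp \<iota>) (pq \<iota>) F)" for n
  proof (induction n)
    case 0
    show ?case
    proof (intro allI impI)
      fix \<iota> :: nat assume "\<iota> < 6"
      then show "\<exists>f\<in>(derived ?G' ^^ 0) K. \<forall>F. f (Op z0 F) = Op z0 (?Psi (pp \<iota>) (pq \<iota>) F)"
        using base[of \<iota>] base_X0[of \<iota>] by (intro bexI[of _ "phi (int i) (pp \<iota>) \<circ> phi (int j) (pq \<iota>)"]) auto
    qed
  next
    case (Suc n)
    show ?case
    proof (intro allI impI)
      fix \<iota> :: nat assume \<iota>: "\<iota> < 6"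
      let ?a = "WA ! \<iota>" and ?b = "WB ! \<iota>"
      have ab: "?a < 6" "?b < 6" using W_lt[OF \<iota>] by auto
      obtain fa where fa: "fa \<in> (derived ?G' ^^ n) K" "\<And>F. fa (Op z0 F) = Op z0 (?Psi (pp ?a) (pq ?a) F)"
        using Suc ab(1) by blast
      obtain fb where fb: "fb \<in> (derived ?G' ^^ n) K" "\<And>F. fb (Op z0 F) = Op z0 (?Psi (pp ?b) (pq ?b) F)"
        using Suc ab(2) by blast
      have faK: "fa \<in> K" and fbK: "fb \<in> K" using fa(1) fb(1) Dsub by blast+
      let ?c = "fa \<otimes>\<^bsub>?G'\<^esub> fb \<otimes>\<^bsub>?G'\<^esub> inv\<^bsub>?G'\<^esub> fa \<otimes>\<^bsub>?G'\<^esub> inv\<^bsub>?G'\<^esub> fb"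
      have "?c \<in> derived_set ?G' ((derived ?G' ^^ n) K)" using fa(1) fb(1) by blast
      then have "?c \<in> derived ?G' ((derived ?G' ^^ n) K)" unfolding derived_def by (rule generate.incl)
      then have cin: "?c \<in> (derived ?G' ^^ Suc n) K" by simp
      have ce: "?c = fa \<circ> fb \<circ> inv\<^bsub>aut_shift\<^esub> fa \<circ> inv\<^bsub>aut_shift\<^esub> fb"
        using invK[OF faK] invK[OF fbK] by simp
      have ia: "(inv\<^bsub>aut_shift\<^esub> fa) (Op z0 F) = Op z0 (?Psi (pq ?a) (pp ?a) F)" for F
        by (rule inv_X0[OF faK fa(2) pp_pq[OF ab(1)] pq_pp[OF ab(1)]])
      have ib: "(inv\<^bsub>aut_shift\<^esub> fb) (Op z0 F) = Op z0 (?Psi (pq ?b) (pp ?b) F)" for F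
        by (rule inv_X0[OF fbK fb(2) pp_pq[OF ab(2)] pq_pp[OF ab(2)]])
      have "?c (Op z0 F) = Op z0 (?Psi (pp \<iota>) (pq \<iota>) F)" for F
        unfolding ce using comm_p[OF \<iota>] comm_q[OF \<iota>]
        by (simp add: fa(2) fb(2) ia ib Psi_comp[OF ij'] comp_assoc)
      then show "\<exists>f\<in>(derived ?G' ^^ Suc n) K. \<forall>F. f (Op z0 F) = Op z0 (?Psi (pp \<iota>) (pq \<iota>) F)"
        using cin by blast
    qed
  qed
  obtain n where n: "(derived ?G' ^^ n) (carrier ?G') = {\<one>\<^bsub>?G'\<^esub>}"
    using sol group.solvable_iff_trivial_derived_seq[OF grpG'] by auto
  obtain f where f: "f \<in> (derived ?G' ^^ n) K" "\<And>F. f (Op z0 F) = Op z0 (?Psi (pp 0) (pq 0) F)"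
    using spec[OF claim[of n], of 0] by auto
  have "f = id" using f(1) n by simp
  then have e: "Op z0 (\<lambda>_ _. dec 0) = Op z0 (?Psi (pp 0) (pq 0) (\<lambda>_ _. dec 0))" using f(2) by simp
  have b: "blk z0 (19 * int i)" by (simp add: blk_z0)
  have "lamp (Op z0 (\<lambda>_ _. dec 0)) (19 * int i) True = lamp (Op z0 (?Psi (pp 0) (pq 0) (\<lambda>_ _. dec 0))) (19 * int i) True"
    using e by simp
  then have "dec 0 = pp 0 (dec 0)" using lamp_Op[OF b] ij' by (simp add: Psi_def upd_def)
  then show False using pp0 by simp
qed

end


theorem mainTheorem1:
  assumes "CARD('a::finite) \<ge> 2"
  shows "\<exists>H. subgroup H (aut_shift :: ((int \<Rightarrow> 'a) \<Rightarrow> (int \<Rightarrow> 'a)) monoid)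
            \<and> finitely_generated_subgroup (aut_shift :: ((int \<Rightarrow> 'a) \<Rightarrow> (int \<Rightarrow> 'a)) monoid) H
            \<and> \<not> virtually_solvable ((aut_shift :: ((int \<Rightarrow> 'a) \<Rightarrow> (int \<Rightarrow> 'a)) monoid)\<lparr>carrier := H\<rparr>)
            \<and> \<not> contains_free_group_rank2 ((aut_shift :: ((int \<Rightarrow> 'a) \<Rightarrow> (int \<Rightarrow> 'a)) monoid)\<lparr>carrier := H\<rparr>)"
proof -
  obtain a b :: 'a where ab: "a \<noteq> b"
  proof -
    have "\<not> (\<forall>a b::'a. a = b)"
    proof
      assume h: "\<forall>a b::'a. a = b"
      then have u: "(UNIV::'a set) = {undefined}" by auto
      have "CARD('a) = card {undefined::'a}" by (simp only: u)
      then have "CARD('a) = 1" by simp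
      then show False using assms by simp
    qed
    then show ?thesis using that by blast
  qed
  interpret bin a b using ab by unfold_locales
  show ?thesis
    using Hg_subgroup Gens_finite Gens_carrier not_vs no_free
    by (intro exI[of _ Hg]) (auto simp: finitely_generated_subgroup_def Hg_def)
qed

end
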